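(* Let $R>r\ge1$ and let $f,g:\mathbb{D}_{R}\to\mathbb{C}$ be analytic in $\mathbb{D}_{R}=\{z\in\mathbb{C}:|z|<R\}$, $f(z)=\sum_{k=0}^{\infty}a_{k}z^{k}$, $g(z)=\sum_{k=0}^{\infty}b_{k}z^{k}$. Then there is a constant $C(r,f,g)$, independent of $n$, such that for all $n\in\mathbb{N}$ and all $|z|\le r$, $$\left|U_{n}(fg)(z)-U_{n}(f)(z)U_{n}(g)(z)-\frac{2z(1-z)f'(z)g'(z)}{n}\right|\le\frac{C(r,f,g)}{n^{2}}.$$
   Context: The complex genuine Bernstein-Durrmeyer polynomials of a function $h$ continuous on $[0,1]$ are $$U_{n}(h)(z)=(n-1)\sum_{k=1}^{n-1}\Big(\int_{0}^{1}h(t)p_{n-2,k-1}(t)\,dt\Big)p_{n,k}(z)+(1-z)^{n}h(0)+z^{n}h(1),\quad z\in\mathbb{C},$$ where $p_{n,k}(z)=\binom{n}{k}z^{k}(1-z)^{n-k}$. *)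

theory Defs
  imports "HOL-Complex_Analysis.Complex_Analysis"
begin

definition bern :: "nat \<Rightarrow> nat \<Rightarrow> complex \<Rightarrow> complex" where
  "bern n k z = of_nat (n choose k) * z ^ k * (1 - z) ^ (n - k)"

text \<open>Complex genuine Bernstein-Durrmeyer polynomial U_n(h)(z), for h : [0,1] -> C
  (given as a function on the reals; only its values on [0,1] matter).\<close>
definition gbd :: "nat \<Rightarrow> (real \<Rightarrow> complex) \<Rightarrow> complex \<Rightarrow> complex" where
  "gbd n h z =
     of_nat (n - 1) * (\<Sum>k=1..n-1.
        integral {0..1} (\<lambda>t. h t * bern (n - 2) (k - 1) (complex_of_real t)) * bern n k z)
     + (1 - z) ^ n * h 0 + z ^ n * h 1"

end

theory Submission
  imports Defs "HOL-Real_Asymp.Real_Asymp"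
begin


definition ff :: "real \<Rightarrow> nat \<Rightarrow> real" where "ff x m = (\<Prod>i<m. x - real i)"
definition rf :: "real \<Rightarrow> nat \<Rightarrow> real" where "rf x m = (\<Prod>i<m. x + real i)"

fun Lah :: "nat \<Rightarrow> nat \<Rightarrow> nat" where
  "Lah 0 m = (if m = 0 then 1 else 0)"
| "Lah (Suc k) m = (if m = 0 then 0 else Lah k (m - 1)) + (m + k) * Lah k m"

lemma ff_Suc: "ff x (Suc m) = ff x m * (x - real m)"
  by (simp add: ff_def)
lemma ff_Suc': "ff x (Suc m) = x * ff (x - 1) m"
  unfolding ff_def by (subst prod.lessThan_Suc_shift) (simp add: algebra_simps)
lemma rf_Suc: "rf x (Suc m) = rf x m * (x + real m)"
  by (simp add: rf_def)

lemma Lah_gt: "m > k \<Longrightarrow> Lah k m = 0"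
  by (induction k arbitrary: m) auto
lemma Lah_diag: "Lah k k = 1"
  by (induction k) (auto simp: Lah_gt)
lemma Lah_sub: "Lah (Suc k) k = (Suc k) * k"
proof (induction k)
  case 0 then show ?case by simp
next
  case (Suc k) then show ?case by (simp add: Lah_diag)
qed

lemma rf_Lah: "rf x k = (\<Sum>m\<le>k. real (Lah k m) * ff x m)"
proof (induction k)
  case 0 then show ?case by (simp add: rf_def ff_def)
next
  case (Suc k)
  have "rf x (Suc k) = (\<Sum>m\<le>k. real (Lah k m) * ff x m) * (x + real k)"
    using Suc by (simp add: rf_Suc)
  also have "\<dots> = (\<Sum>m\<le>k. real (Lah k m) * ff x (Suc m) + real (Lah k m) * (real m + real k) * ff x m)"
    unfolding sum_distrib_right by (rule sum.cong) (simp_all add: ff_Suc algebra_simps)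
  also have "\<dots> = (\<Sum>m\<le>k. real (Lah k m) * ff x (Suc m)) + (\<Sum>m\<le>k. real (Lah k m) * (real m + real k) * ff x m)"
    by (rule sum.distrib)
  also have "(\<Sum>m\<le>k. real (Lah k m) * ff x (Suc m)) = (\<Sum>m\<le>Suc k. real (if m = 0 then 0 else Lah k (m - 1)) * ff x m)"
    by (subst sum.atMost_Suc_shift) simp
  also have "(\<Sum>m\<le>k. real (Lah k m) * (real m + real k) * ff x m) = (\<Sum>m\<le>Suc k. real ((m + k) * Lah k m) * ff x m)"
    by (simp add: Lah_gt algebra_simps)
  finally show ?case by (simp add: sum.distrib[symmetric] algebra_simps)
qed

lemma bern_Suc: "of_nat (Suc i) * bern (Suc n) (Suc i) z = of_nat (Suc n) * z * bern n i z"
proof -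
  have h: "of_nat (Suc i) * of_nat (Suc n choose Suc i) = (of_nat (Suc n) * of_nat (n choose i) :: complex)"
    by (metis Suc_times_binomial of_nat_mult)
  have "of_nat (Suc i) * bern (Suc n) (Suc i) z = (of_nat (Suc i) * of_nat (Suc n choose Suc i)) * (z * z ^ i * (1 - z) ^ (n - i))"
    unfolding bern_def by (simp only: power_Suc diff_Suc_Suc mult_ac)
  also have "\<dots> = (of_nat (Suc n) * of_nat (n choose i)) * (z * z ^ i * (1 - z) ^ (n - i))"
    by (simp only: h)
  also have "\<dots> = of_nat (Suc n) * z * bern n i z"
    unfolding bern_def by (simp only: mult_ac)
  finally show ?thesis .
qed

lemma bern_ff: "(\<Sum>j\<le>n. bern n j z * of_real (ff (real j) m)) = of_real (ff (real n) m) * z ^ m"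
proof (induction m arbitrary: n)
  case 0
  have "(\<Sum>j\<le>n. bern n j z) = (z + (1 - z)) ^ n"
    unfolding bern_def binomial_ring by simp
  then show ?case by (simp add: ff_def)
next
  case (Suc m)
  show ?case
  proof (cases n)
    case 0 then show ?thesis by (simp add: ff_Suc' bern_def)
  next
    case (Suc n')
    have "(\<Sum>j\<le>n. bern n j z * of_real (ff (real j) (Suc m)))
        = (\<Sum>i\<le>n'. bern (Suc n') (Suc i) z * of_real (ff (real (Suc i)) (Suc m)))"
      unfolding Suc by (subst sum.atMost_Suc_shift) (simp add: ff_Suc')
    also have "\<dots> = (\<Sum>i\<le>n'. of_nat (Suc n') * z * (bern n' i z * of_real (ff (real i) m)))"
    proof (rule sum.cong)
      fix i assume "i \<in> {..n'}"
      have "bern (Suc n') (Suc i) z * of_real (ff (real (Suc i)) (Suc m))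
          = (of_nat (Suc i) * bern (Suc n') (Suc i) z) * of_real (ff (real i) m)"
        by (simp add: ff_Suc' algebra_simps)
      also have "\<dots> = of_nat (Suc n') * z * (bern n' i z * of_real (ff (real i) m))"
        by (simp only: bern_Suc) (simp add: algebra_simps)
      finally show "bern (Suc n') (Suc i) z * of_real (ff (real (Suc i)) (Suc m)) = of_nat (Suc n') * z * (bern n' i z * of_real (ff (real i) m))" .
    qed simp
    also have "\<dots> = of_nat (Suc n') * z * (of_real (ff (real n') m) * z ^ m)"
      by (simp add: sum_distrib_left[symmetric] Suc.IH)
    also have "\<dots> = of_real (ff (real n) (Suc m)) * z ^ Suc m"
      unfolding Suc by (simp add: ff_Suc' algebra_simps)
    finally show ?thesis .
  qed
qed

lemma bern_rf: "(\<Sum>j\<le>n. bern n j z * of_real (rf (real j) k)) = (\<Sum>m\<le>k. of_real (real (Lah k m) * ff (real n) m) * z ^ m)"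
proof -
  have "(\<Sum>j\<le>n. bern n j z * of_real (rf (real j) k)) = (\<Sum>j\<le>n. \<Sum>m\<le>k. of_real (real (Lah k m)) * (bern n j z * of_real (ff (real j) m)))"
    by (simp add: rf_Lah sum_distrib_left algebra_simps)
  also have "\<dots> = (\<Sum>m\<le>k. of_real (real (Lah k m)) * (\<Sum>j\<le>n. bern n j z * of_real (ff (real j) m)))"
    by (subst sum.swap) (simp add: sum_distrib_left)
  also have "\<dots> = (\<Sum>m\<le>k. of_real (real (Lah k m) * ff (real n) m) * z ^ m)"
    by (simp add: bern_ff mult.assoc)
  finally show ?thesis .
qed

lemma ff_nonneg: "ff (real n) m \<ge> 0"
proof (cases "m \<le> n")
  case True then show ?thesis unfolding ff_def by (intro prod_nonneg) auto
next
  case False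
  then have "n \<in> {..<m}" by auto
  then have "ff (real n) m = 0" unfolding ff_def by (intro prod_zero) auto
  then show ?thesis by simp
qed

lemma rf_pos: "x > 0 \<Longrightarrow> rf x k > 0"
  unfolding rf_def by (intro prod_pos) auto



lemma beta_nat:
  fixes a b :: nat
  shows "((\<lambda>t::real. t ^ a * (1 - t) ^ b) has_integral (fact a * fact b / fact (a + b + 1))) {0..1}"
proof -
  have "((\<lambda>t. t powr (real a + 1 - 1) * (1 - t) powr (real b + 1 - 1)) has_integral Beta (real a + 1) (real b + 1)) {0..1}"
    by (rule has_integral_Beta_real) auto
  moreover have "Beta (real a + 1) (real b + 1) = fact a * fact b / fact (a + b + 1)"
  proof -
    have "Gamma (real a + 1) = fact a" "Gamma (real b + 1) = fact b"
      "Gamma (real a + 1 + (real b + 1)) = fact (a + b + 1)"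
      using Gamma_fact[of a] Gamma_fact[of b] Gamma_fact[of "a+b+1"] by (simp_all add: add_ac)
    then show ?thesis by (simp add: Beta_def)
  qed
  ultimately have h: "((\<lambda>t. t powr (real a) * (1 - t) powr (real b)) has_integral (fact a * fact b / fact (a + b + 1))) {0..1}"
    by simp
  show ?thesis
  proof (rule has_integral_spike_finite[OF _ _ h, of "{0,1}"])
    fix t assume "t \<in> {0..1::real} - {0, 1}"
    then have "0 < t" "0 < 1 - t" by auto
    then show "t ^ a * (1 - t) ^ b = t powr (real a) * (1 - t) powr (real b)"
      by (simp add: powr_realpow)
  qed simp
qed

lemma rf_fact: "rf (real (Suc j)) k = fact (j + k) / fact j"
proof (induction k)
  case 0 then show ?case by (simp add: rf_def)
next
  case (Suc k)
  have "fact (j + Suc k) = (real (j + k) + 1) * (fact (j + k) :: real)"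
    by (simp add: algebra_simps)
  then show ?case by (simp only: rf_Suc Suc.IH) (simp add: field_simps)
qed

lemma rf_0[simp]: "rf x 0 = 1" by (simp add: rf_def)

lemma frac_aux: "(b::real) \<noteq> 0 \<Longrightarrow> c \<noteq> 0 \<Longrightarrow> e \<noteq> 0 \<Longrightarrow> a \<noteq> 0 \<Longrightarrow>
   a / (b * c) * (d * c) / e = (d / b) / (e / a)"
  by (simp add: field_simps)

lemma moment_int:
  fixes m i k :: nat
  assumes "i \<le> m"
  shows "of_nat (Suc m) * integral {0..1} (\<lambda>t. (complex_of_real t) ^ k * bern m i (of_real t))
       = of_real (rf (real (Suc i)) k / rf (real (Suc (Suc m))) k)"
proof -
  have r: "((\<lambda>t. real (m choose i) * (t ^ (k + i) * (1 - t) ^ (m - i))) has_integral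
      (real (m choose i) * (fact (k + i) * fact (m - i) / fact (k + i + (m - i) + 1)))) {0..1}"
    by (intro has_integral_mult_right beta_nat)
  have "((\<lambda>t. (complex_of_real t) ^ k * bern m i (of_real t)) has_integral
     of_real (real (m choose i) * (fact (k + i) * fact (m - i) / fact (k + i + (m - i) + 1)))) {0..1}"
    using has_integral_of_real[OF r, where 'b=complex]
    by (simp add: bern_def power_add algebra_simps)
  then have "integral {0..1} (\<lambda>t. (complex_of_real t) ^ k * bern m i (of_real t))
     = of_real (real (m choose i) * (fact (k + i) * fact (m - i) / fact (m + k + 1)))"
    using assms by (simp add: integral_unique add_ac)
  moreover have "real (Suc m) * (real (m choose i) * (fact (k + i) * fact (m - i) / fact (m + k + 1)))
      = rf (real (Suc i)) k / rf (real (Suc (Suc m))) k"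
  proof -
    have "real (Suc m) * real (m choose i) = fact (Suc m) / (fact i * fact (m - i))"
      using assms by (simp add: binomial_fact field_simps)
    then have "real (Suc m) * (real (m choose i) * (fact (k + i) * fact (m - i) / fact (m + k + 1)))
       = fact (Suc m) / (fact i * fact (m - i)) * (fact (k + i) * fact (m - i)) / fact (m + k + 1)"
      by (metis (no_types, lifting) mult.assoc times_divide_eq_right)
    also have "\<dots> = (fact (i + k) / fact i) / (fact (Suc m + k) / fact (Suc m))"
      using frac_aux[of "fact i" "fact (m - i)" "fact (m + k + 1)" "fact (Suc m)" "fact (k + i)"]
      by (simp add: add_ac)
    finally show ?thesis by (simp only: rf_fact)
  qed
  ultimately show ?thesis
    by (metis of_real_mult of_real_of_nat_eq)
qed

lemma rf_zero: "rf 0 k = (if k = 0 then 1 else 0)"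
  unfolding rf_def by (cases k) (auto simp: prod.lessThan_Suc_shift)

lemma mom_formula:
  assumes "n \<ge> 1"
  shows "gbd n (\<lambda>t. (complex_of_real t) ^ k) z
       = (\<Sum>j\<le>n. bern n j z * of_real (rf (real j) k / rf (real n) k))"
proof -
  have rfn: "rf (real n) k > 0" using assms by (intro rf_pos) auto
  have e0: "bern n 0 z * of_real (rf 0 k / rf (real n) k) = (1 - z) ^ n * (complex_of_real 0) ^ k"
    by (simp add: bern_def rf_zero)
  have en: "bern n n z * of_real (rf (real n) k / rf (real n) k) = z ^ n * (complex_of_real 1) ^ k"
    using rfn by (simp add: bern_def)
  show ?thesis
  proof (cases "n = 1")
    case True
    have "rf 1 k > 0" using rfn True by simp
    then show ?thesis using e0 en True by (simp add: gbd_def bern_def)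
  next
    case False
    then obtain m where m: "n = Suc (Suc m)" using assms by (metis Suc_le_D le_antisym not_less_eq_eq One_nat_def)
    have mid: "of_nat (n - 1) * (\<Sum>j=1..n-1. integral {0..1} (\<lambda>t. (complex_of_real t) ^ k * bern (n - 2) (j - 1) (complex_of_real t)) * bern n j z)
       = (\<Sum>i\<le>m. bern n (Suc i) z * of_real (rf (real (Suc i)) k / rf (real n) k))"
    proof -
      have "(\<Sum>j=1..n-1. integral {0..1} (\<lambda>t. (complex_of_real t) ^ k * bern (n - 2) (j - 1) (complex_of_real t)) * bern n j z)
          = (\<Sum>i\<le>m. integral {0..1} (\<lambda>t. (complex_of_real t) ^ k * bern m i (complex_of_real t)) * bern n (Suc i) z)"
      proof -
        have "{1..n-1} = {Suc 0..Suc m}" by (simp add: m)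
        then show ?thesis by (simp only: sum.shift_bounds_cl_Suc_ivl) (simp add: m atLeast0AtMost)
      qed
      moreover have "of_nat (n - 1) * (\<Sum>i\<le>m. integral {0..1} (\<lambda>t. (complex_of_real t) ^ k * bern m i (complex_of_real t)) * bern n (Suc i) z)
         = (\<Sum>i\<le>m. bern n (Suc i) z * of_real (rf (real (Suc i)) k / rf (real n) k))"
        unfolding sum_distrib_left
      proof (rule sum.cong)
        fix i assume "i \<in> {..m}"
        then have "of_nat (Suc m) * integral {0..1} (\<lambda>t. (complex_of_real t) ^ k * bern m i (of_real t))
          = of_real (rf (real (Suc i)) k / rf (real n) k)" using moment_int[of i m k] m by simp
        then show "of_nat (n - 1) * (integral {0..1} (\<lambda>t. (complex_of_real t) ^ k * bern m i (complex_of_real t)) * bern n (Suc i) z)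
          = bern n (Suc i) z * of_real (rf (real (Suc i)) k / rf (real n) k)"
          using m by (metis diff_Suc_1 mult.assoc mult.commute)
      qed simp
      ultimately show ?thesis by simp
    qed
    have "(\<Sum>j\<le>n. bern n j z * of_real (rf (real j) k / rf (real n) k))
        = bern n 0 z * of_real (rf 0 k / rf (real n) k) + (\<Sum>i\<le>m. bern n (Suc i) z * of_real (rf (real (Suc i)) k / rf (real n) k))
          + bern n n z * of_real (rf (real n) k / rf (real n) k)"
      unfolding m by (subst sum.atMost_Suc_shift) (simp add: add_ac)
    then show ?thesis using e0 en mid by (simp add: gbd_def add_ac)
  qed
qed



definition coef :: "nat \<Rightarrow> nat \<Rightarrow> nat \<Rightarrow> real" where
  "coef n k m = real (Lah k m) * ff (real n) m / rf (real n) k"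

lemma mom_coef:
  assumes "n \<ge> 1"
  shows "gbd n (\<lambda>t. (complex_of_real t) ^ k) z = (\<Sum>m\<le>k. of_real (coef n k m) * z ^ m)"
proof -
  have "gbd n (\<lambda>t. (complex_of_real t) ^ k) z = (\<Sum>j\<le>n. bern n j z * of_real (rf (real j) k)) / of_real (rf (real n) k)"
    using mom_formula[OF assms] by (simp add: sum_divide_distrib)
  also have "\<dots> = (\<Sum>m\<le>k. of_real (real (Lah k m) * ff (real n) m) * z ^ m) / of_real (rf (real n) k)"
    by (simp only: bern_rf)
  also have "\<dots> = (\<Sum>m\<le>k. of_real (coef n k m) * z ^ m)"
    by (simp add: sum_divide_distrib coef_def)
  finally show ?thesis .
qed

lemma coef_nonneg: "n \<ge> 1 \<Longrightarrow> coef n k m \<ge> 0"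
  unfolding coef_def using ff_nonneg[of n m] rf_pos[of "real n" k] by simp

lemma coef_sum: "n \<ge> 1 \<Longrightarrow> (\<Sum>m\<le>k. coef n k m) = 1"
  unfolding coef_def using rf_Lah[of "real n" k] rf_pos[of "real n" k]
  by (simp add: sum_divide_distrib[symmetric])

lemma coef_le1: assumes "n \<ge> 1" "m \<le> k" shows "coef n k m \<le> 1"
proof -
  have "coef n k m \<le> (\<Sum>m\<le>k. coef n k m)"
    using assms by (intro member_le_sum) (auto simp: coef_nonneg)
  then show ?thesis using coef_sum[OF assms(1)] by simp
qed

lemma coef_top: "coef n k k = ff (real n) k / rf (real n) k"
  by (simp add: coef_def Lah_diag)

lemma coef_sub: "coef n (Suc (Suc p)) (Suc p) = real ((p+2)*(p+1)) * ff (real n) (Suc p) / rf (real n) (Suc (Suc p))"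
  unfolding coef_def Lah_sub by simp

lemma prod_bounds:
  fixes a :: "nat \<Rightarrow> real"
  assumes "\<And>i. i < k \<Longrightarrow> 0 \<le> a i \<and> a i \<le> 1"
  shows "1 - (\<Sum>i<k. a i) \<le> (\<Prod>i<k. 1 - a i) \<and> (\<Prod>i<k. 1 - a i) \<le> 1 - (\<Sum>i<k. a i) + (\<Sum>i<k. a i)^2
         \<and> 0 \<le> (\<Prod>i<k. 1 - a i) \<and> (\<Prod>i<k. 1 - a i) \<le> 1"
  using assms
proof (induction k)
  case 0 then show ?case by simp
next
  case (Suc k)
  define P where "P = (\<Prod>i<k. 1 - a i)"
  define S where "S = (\<Sum>i<k. a i)"
  have IH: "1 - S \<le> P" "P \<le> 1 - S + S^2" "0 \<le> P" "P \<le> 1"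
    using Suc by (auto simp: P_def S_def)
  have a: "0 \<le> a k" "a k \<le> 1" using Suc.prems by auto
  have S0: "0 \<le> S" unfolding S_def using Suc.prems by (intro sum_nonneg) auto
  let ?b = "a k"
  have l: "1 - (S + ?b) \<le> P * (1 - ?b)"
  proof -
    have "(1 - S) * (1 - ?b) \<le> P * (1 - ?b)" using IH a by (intro mult_right_mono) auto
    moreover have "1 - (S + ?b) \<le> (1 - S) * (1 - ?b)" using S0 a by (simp add: algebra_simps)
    ultimately show ?thesis by linarith
  qed
  have u: "P * (1 - ?b) \<le> 1 - (S + ?b) + (S + ?b)^2"
  proof -
    have "P * (1 - ?b) \<le> (1 - S + S^2) * (1 - ?b)" using IH a by (intro mult_right_mono) auto
    moreover have "?b * S^2 \<ge> 0" using a by simp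
    moreover have "?b * S \<ge> 0" using a S0 by simp
    moreover have "?b * ?b \<ge> 0" by simp
    moreover have "(1 - S + S^2) * (1 - ?b) = 1 - S + S*S - ?b + ?b*S - ?b*S^2"
      by (simp add: power2_eq_square algebra_simps)
    moreover have "1 - (S + ?b) + (S + ?b)^2 = 1 - S - ?b + S*S + 2*(?b*S) + ?b*?b"
      by (simp add: power2_eq_square algebra_simps)
    ultimately show ?thesis by linarith
  qed
  have "0 \<le> P * (1 - ?b)" using IH a by simp
  moreover have "P * (1 - ?b) \<le> 1" using IH a by (simp add: mult_le_one)
  ultimately show ?case using l u by (simp add: P_def S_def add.commute)
qed

lemma gauss_real: "(\<Sum>i<k. real i) = real k * (real k - 1) / 2"
  by (induction k) (simp_all add: field_simps)

lemma ratio_prod: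
  assumes "n \<ge> 1"
  shows "ff (real n) k / rf (real n) k = (\<Prod>i<k. 1 - 2 * real i / (real n + real i))"
  unfolding ff_def rf_def prod_dividef[symmetric]
proof (rule prod.cong)
  fix i assume "i \<in> {..<k}"
  have "real n + real i > 0" using assms by simp
  then show "(real n - real i) / (real n + real i) = 1 - 2 * real i / (real n + real i)"
    by (simp add: field_simps)
qed simp

lemma ff_zero: "n < k \<Longrightarrow> ff (real n) k = 0"
  unfolding ff_def by (rule prod_zero) auto

lemma P_est:
  fixes n k :: nat
  assumes n: "n \<ge> 1"
  defines "x \<equiv> real (k * (k - 1)) / real n"
  shows "\<bar>ff (real n) k / rf (real n) k - 1 + x\<bar> \<le> 3 * real k ^ 4 / real n ^ 2"
    and "k \<le> n \<Longrightarrow> 1 - x \<le> ff (real n) k / rf (real n) k"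
    and "ff (real n) k / rf (real n) k \<le> 1"
proof -
  define N where "N = real n"
  have N: "N \<ge> 1" using n by (simp add: N_def)
  have x2: "x^2 \<le> real k ^ 4 / N^2"
  proof -
    have "k * (k - 1) \<le> k ^ 2" unfolding power2_eq_square by (intro mult_le_mono2) auto
    then have "real (k * (k - 1)) \<le> real k ^ 2" by (metis of_nat_le_iff of_nat_power)
    then have "real (k * (k - 1)) ^ 2 \<le> (real k ^ 2)^2" by (intro power_mono) auto
    then show ?thesis unfolding x_def N_def by (simp add: power_divide divide_right_mono power_mult[symmetric])
  qed
  have x0: "x \<ge> 0" unfolding x_def by simp
  define a where "a i = 2 * real i / (N + real i)" for i
  have P: "ff (real n) k / rf (real n) k = (\<Prod>i<k. 1 - a i)"
    using ratio_prod[OF n] by (simp add: a_def N_def)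
  have case1: "1 - x \<le> ff (real n) k / rf (real n) k \<and> \<bar>ff (real n) k / rf (real n) k - 1 + x\<bar> \<le> 3 * real k ^ 4 / N ^ 2"
    if kn: "k \<le> n"
  proof -
    have a01: "0 \<le> a i \<and> a i \<le> 1" if "i < k" for i
      using that kn N by (auto simp: a_def N_def field_simps)
    note pb = prod_bounds[of k a, OF a01]
    define S where "S = (\<Sum>i<k. a i)"
    have Sx: "S \<le> x"
    proof -
      have "S \<le> (\<Sum>i<k. 2 * real i / N)"
        unfolding S_def a_def using N by (intro sum_mono frac_le) auto
      also have "\<dots> = x"
        unfolding x_def N_def by (simp add: sum_divide_distrib[symmetric] sum_distrib_left[symmetric] gauss_real)
          (cases k, simp_all add: algebra_simps)
      finally show ?thesis .
    qed
    have Sx2: "x - 2 * real k ^ 3 / N^2 \<le> S"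
    proof -
      have "a i \<ge> 2 * real i / N - 2 * real k ^ 2 / N^2" if "i < k" for i
      proof -
        have "2 * real i / N - a i = 2 * real i ^ 2 / (N * (N + real i))"
          unfolding a_def using N by (simp add: field_simps power2_eq_square)
        also have "\<dots> \<le> 2 * real i ^ 2 / (N * N)"
          using N by (intro divide_left_mono mult_left_mono mult_pos_pos) auto
        also have "\<dots> \<le> 2 * real k ^ 2 / N^2"
          using that N by (auto simp: power2_eq_square intro!: divide_right_mono mult_mono)
        finally show ?thesis by simp
      qed
      then have "(\<Sum>i<k. 2 * real i / N - 2 * real k ^ 2 / N^2) \<le> S"
        unfolding S_def by (intro sum_mono) auto
      moreover have "(\<Sum>i<k. 2 * real i / N - 2 * real k ^ 2 / N^2) = x - 2 * real k ^ 3 / N^2"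
      proof -
        have "(\<Sum>i<k. 2 * real i / N) = x"
          unfolding x_def N_def by (simp add: sum_divide_distrib[symmetric] sum_distrib_left[symmetric] gauss_real)
            (cases k, simp_all add: algebra_simps)
        then show ?thesis by (simp add: sum_subtractf power3_eq_cube power2_eq_square)
      qed
      ultimately show ?thesis by simp
    qed
    have S0: "S \<ge> 0" unfolding S_def using a01 by (intro sum_nonneg) auto
    have "S^2 \<le> x^2" using S0 Sx by (intro power_mono) auto
    have k3: "real k ^ 3 \<le> real k ^ 4"
      by (cases k) (auto intro!: power_increasing)
    have lo: "1 - x \<le> (\<Prod>i<k. 1 - a i)" using pb Sx unfolding S_def by linarith
    have hi: "(\<Prod>i<k. 1 - a i) - 1 + x \<le> 3 * real k ^ 4 / N ^ 2"
    proof -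
      have "(\<Prod>i<k. 1 - a i) - 1 + x \<le> (x - S) + S^2" using pb unfolding S_def by linarith
      also have "\<dots> \<le> 2 * real k ^ 3 / N^2 + real k ^ 4 / N^2" using Sx2 \<open>S^2 \<le> x^2\<close> x2 by linarith
      also have "\<dots> \<le> 3 * real k ^ 4 / N ^ 2" using k3 N by (simp add: divide_right_mono field_simps)
      finally show ?thesis .
    qed
    show ?thesis using lo hi P by auto
  qed
  show "ff (real n) k / rf (real n) k \<le> 1"
  proof (cases "k \<le> n")
    case True
    then have "0 \<le> a i \<and> a i \<le> 1" if "i < k" for i
      using that N by (auto simp: a_def N_def field_simps)
    then show ?thesis using prod_bounds[of k a] P by auto
  next
    case False then show ?thesis by (simp add: ff_zero)
  qed
  show "k \<le> n \<Longrightarrow> 1 - x \<le> ff (real n) k / rf (real n) k" by (rule conjunct1[OF case1])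
  show "\<bar>ff (real n) k / rf (real n) k - 1 + x\<bar> \<le> 3 * real k ^ 4 / real n ^ 2"
  proof (cases "k \<le> n")
    case True then show ?thesis using conjunct2[OF case1[OF True]] by (simp only: N_def)
  next
    case False
    then have P0: "ff (real n) k / rf (real n) k = 0" by (simp add: ff_zero)
    have "real (k * (k - 1)) \<ge> real n"
    proof -
      have "k - 1 \<ge> 1" using False n by linarith
      then have "k * 1 \<le> k * (k - 1)" by (rule mult_le_mono2)
      then have "k * (k - 1) \<ge> n" using False by linarith
      then show ?thesis by (simp only: of_nat_le_iff)
    qed
    then have h: "real n / real n \<le> real (k * (k - 1)) / real n" by (intro divide_right_mono) auto
    have "x \<ge> 1" using n h unfolding x_def[symmetric] by simp
    then have "1 * x \<le> x * x" by (intro mult_right_mono) auto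
    moreover have "\<bar>0 - 1 + x\<bar> = x - 1" using \<open>x \<ge> 1\<close> by simp
    moreover have "x^2 = x * x" by (simp add: power2_eq_square)
    ultimately have "\<bar>0 - 1 + x\<bar> \<le> x^2" by linarith
    moreover have "\<bar>ff (real n) k / rf (real n) k - 1 + x\<bar> = \<bar>0 - 1 + x\<bar>" by (simp only: P0)
    moreover have "real k ^ 4 / real n ^ 2 \<ge> 0" by simp
    ultimately show ?thesis using x2 unfolding N_def by linarith
  qed
qed



lemma Q_est:
  fixes n p :: nat
  assumes n: "n \<ge> 1"
  defines "x \<equiv> real ((p+2)*(p+1)) / real n"
  shows "\<bar>coef n (Suc (Suc p)) (Suc p) - x\<bar> \<le> real (Suc (Suc p)) ^ 4 / real n ^ 2"
proof -
  define N where "N = real n"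
  have N: "N \<ge> 1" using n by (simp add: N_def)
  define R where "R = ff (real n) (Suc p) / rf (real n) (Suc p)"
  define c where "c = N / (N + real p + 1)"
  have x0: "x \<ge> 0" unfolding x_def by simp
  have Q: "coef n (Suc (Suc p)) (Suc p) = x * c * R"
  proof -
    have "coef n (Suc (Suc p)) (Suc p) = real ((p+2)*(p+1)) * ff (real n) (Suc p) / (rf (real n) (Suc p) * (N + real p + 1))"
      by (simp only: coef_sub rf_Suc) (simp add: N_def algebra_simps)
    moreover have "rf (real n) (Suc p) > 0" using n by (intro rf_pos) auto
    moreover have "N + real p + 1 \<noteq> 0" using N by linarith
    moreover have "\<And>B D Y F. B \<noteq> 0 \<Longrightarrow> D \<noteq> 0 \<Longrightarrow> Y * F / (B * D) = (Y / N) * (N / D) * (F / B)"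
      using N by (simp add: field_simps)
    ultimately show ?thesis unfolding x_def c_def R_def N_def
      by (metis less_irrefl)
  qed
  have R1: "R \<le> 1" "R \<ge> 0" unfolding R_def using P_est(3)[OF n, of "Suc p"] ff_nonneg[of n "Suc p"] rf_pos[of "real n" "Suc p"] n
    by auto
  have c01: "0 \<le> c" "c \<le> 1" unfolding c_def using N by auto
  have K: "x * (real (Suc p))^2 / N \<le> real (Suc (Suc p)) ^ 4 / N ^ 2"
  proof -
    have "x * (real (Suc p))^2 / N = real (Suc (Suc p)) * real (Suc p) ^ 3 / N^2"
      unfolding x_def N_def by (simp add: power2_eq_square power3_eq_cube field_simps)
    also have "\<dots> \<le> real (Suc (Suc p)) * real (Suc (Suc p)) ^ 3 / N^2"
      by (intro divide_right_mono mult_left_mono power_mono) auto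
    also have "\<dots> = real (Suc (Suc p)) ^ 4 / N ^ 2"
      by (simp add: power_Suc[symmetric] del: power_Suc of_nat_Suc)
    finally show ?thesis .
  qed
  show ?thesis
  proof (cases "Suc p \<le> n")
    case True
    define x' where "x' = real (Suc p * (Suc p - 1)) / real n"
    have Rl: "1 - x' \<le> R" unfolding R_def x'_def using P_est(2)[OF n True] .
    have up: "x * c * R \<le> x"
    proof -
      have "c * R \<le> 1" using c01 R1 by (simp add: mult_le_one)
      then show ?thesis using x0 by (metis mult.assoc mult_left_le)
    qed
    have lo: "x - x * c * R \<le> x * (real (Suc p))^2 / N"
    proof -
      have "c * (1 - x') \<le> c * R" using c01 Rl by (intro mult_left_mono)
      then have "x * (1 - c * R) \<le> x * (1 - c * (1 - x'))" using x0 by (intro mult_left_mono) auto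
      moreover have "1 - c * (1 - x') \<le> real (Suc p) / N + x'"
      proof -
        have "1 - c = (real p + 1) / (N + real p + 1)" unfolding c_def using N by (simp add: field_simps)
        also have "\<dots> \<le> (real p + 1) / N" using N by (intro divide_left_mono) auto
        finally have "1 - c \<le> real (Suc p) / N" by (simp add: add.commute)
        moreover have "c * x' \<le> x'"
          by (rule mult_left_le_one_le) (use c01 in \<open>auto simp: x'_def\<close>)
        ultimately show ?thesis by (simp add: algebra_simps)
      qed
      moreover have "real (Suc p) / N + x' = (real (Suc p))^2 / N"
        unfolding x'_def N_def by (simp add: power2_eq_square add_divide_distrib[symmetric] algebra_simps)
      ultimately have "x * (1 - c * R) \<le> x * ((real (Suc p))^2 / N)"
        using x0 by (metis mult_left_mono order_trans)
      then show ?thesis by (simp add: algebra_simps)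
    qed
    show ?thesis using up lo K Q unfolding N_def by (simp add: abs_le_iff)
  next
    case False
    then have "R = 0" unfolding R_def by (simp add: ff_zero)
    then have Q0: "coef n (Suc (Suc p)) (Suc p) = 0" using Q by simp
    have "real n \<le> real ((p+2)*(p+1))" using False by (simp only: of_nat_le_iff) (simp add: mult_le_mono)
    then have h: "real n / real n \<le> real ((p+2)*(p+1)) / real n" by (intro divide_right_mono) auto
    have x1: "x \<ge> 1" using n h unfolding x_def[symmetric] by simp
    have "x \<le> x * (real (Suc p))^2 / N"
    proof -
      have "(real (Suc p))^2 / N \<ge> 1"
      proof -
        have "N \<le> real (Suc p)" using False by (simp add: N_def)
        also have "\<dots> \<le> (real (Suc p))^2" by (simp add: power2_eq_square)
        finally show ?thesis using N by simp
      qed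
      then have "x * 1 \<le> x * ((real (Suc p))^2 / N)" using x0 by (intro mult_left_mono)
      then show ?thesis by simp
    qed
    then show ?thesis using Q0 K x0 unfolding N_def by simp
  qed
qed

lemma pow_le_r: assumes "norm (z::complex) \<le> r" "1 \<le> r" "m \<le> k" shows "norm z ^ m \<le> r ^ k"
proof -
  have "norm z ^ m \<le> r ^ m" using assms by (intro power_mono) auto
  also have "\<dots> \<le> r ^ k" using assms by (intro power_increasing) auto
  finally show ?thesis .
qed

lemma mom_bound:
  assumes n: "n \<ge> 1" and z: "norm z \<le> r" and r: "1 \<le> r"
  shows "norm (gbd n (\<lambda>t. (complex_of_real t) ^ k) z) \<le> r ^ k"
proof -
  have "norm (gbd n (\<lambda>t. (complex_of_real t) ^ k) z) \<le> (\<Sum>m\<le>k. norm (of_real (coef n k m) * z ^ m))"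
    unfolding mom_coef[OF n] by (rule norm_sum)
  also have "\<dots> \<le> (\<Sum>m\<le>k. coef n k m * r ^ k)"
  proof (rule sum_mono)
    fix m assume "m \<in> {..k}"
    then have "norm z ^ m \<le> r ^ k" using pow_le_r[OF z r] by auto
    then show "norm (of_real (coef n k m) * z ^ m) \<le> coef n k m * r ^ k"
      using coef_nonneg[OF n] by (simp add: norm_mult norm_power mult_left_mono)
  qed
  also have "\<dots> = r ^ k" using coef_sum[OF n] by (simp add: sum_distrib_right[symmetric])
  finally show ?thesis .
qed

lemma eps_bound:
  assumes n: "n \<ge> 1" and z: "norm z \<le> r" and r: "1 \<le> r"
  shows "norm (gbd n (\<lambda>t. (complex_of_real t) ^ k) z - z ^ k
           - of_real (real (k * (k - 1)) / real n) * (z ^ (k - 1) - z ^ k)) \<le> 8 * real k ^ 4 * r ^ k / real n ^ 2"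
proof (cases k)
  case 0
  then have "coef n 0 0 = 1" using coef_sum[OF n, of 0] by simp
  then show ?thesis using 0 mom_coef[OF n, of 0 z] by simp
next
  case (Suc k')
  show ?thesis
  proof (cases k')
    case 0
    have c0: "coef n 1 0 = 0" by (simp add: coef_def)
    then have "coef n 1 1 = 1" using coef_sum[OF n, of 1] by simp
    then show ?thesis using Suc 0 c0 mom_coef[OF n, of 1 z] r by simp
  next
    case (Suc p)
    have k: "k = Suc (Suc p)" using Suc \<open>k = Suc k'\<close> by simp
    define N where "N = real n"
    define x where "x = real ((p+2)*(p+1)) / real n"
    define K where "K = real k ^ 4 / N ^ 2"
    have xk: "real (k * (k - 1)) / real n = x" unfolding x_def k by simp
    have e1: "\<bar>coef n k (Suc p) - x\<bar> \<le> K" unfolding K_def N_def x_def k using Q_est[OF n] by simp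
    have e2: "\<bar>coef n k k - 1 + x\<bar> \<le> 3 * K"
      using P_est(1)[OF n, of k] unfolding K_def N_def coef_top xk by simp
    have sum3: "(\<Sum>m\<le>k. f m) = (\<Sum>m\<le>p. f m) + f (Suc p) + f k" for f :: "nat \<Rightarrow> 'a::comm_monoid_add"
      unfolding k by (simp add: add_ac)
    define T where "T = (\<Sum>m\<le>p. coef n k m)"
    have T: "T \<le> 4 * K"
    proof -
      have "T + coef n k (Suc p) + coef n k k = 1" using coef_sum[OF n, of k] unfolding T_def sum3 .
      then show ?thesis using e1 e2 by (simp add: abs_le_iff)
    qed
    have E: "gbd n (\<lambda>t. (complex_of_real t) ^ k) z - z ^ k - of_real x * (z ^ (k - 1) - z ^ k)
      = (\<Sum>m\<le>p. of_real (coef n k m) * z ^ m) + of_real (coef n k (Suc p) - x) * z ^ Suc p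
        + of_real (coef n k k - 1 + x) * z ^ k"
      unfolding mom_coef[OF n] sum3 by (simp add: k algebra_simps)
    have b1: "norm (\<Sum>m\<le>p. of_real (coef n k m) * z ^ m) \<le> T * r ^ k"
    proof -
      have "norm (\<Sum>m\<le>p. of_real (coef n k m) * z ^ m) \<le> (\<Sum>m\<le>p. norm (of_real (coef n k m) * z ^ m))"
        by (rule norm_sum)
      also have "\<dots> \<le> (\<Sum>m\<le>p. coef n k m * r ^ k)"
      proof (rule sum_mono)
        fix m assume "m \<in> {..p}"
        then have "m \<le> k" using k by auto
        then have "norm z ^ m \<le> r ^ k" by (rule pow_le_r[OF z r])
        then show "norm (of_real (coef n k m) * z ^ m) \<le> coef n k m * r ^ k"
          using coef_nonneg[OF n] by (simp add: norm_mult norm_power mult_left_mono)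
      qed
      also have "\<dots> = T * r ^ k" unfolding T_def by (simp add: sum_distrib_right)
      finally show ?thesis .
    qed
    have b2: "norm (of_real (coef n k (Suc p) - x) * z ^ Suc p) \<le> K * r ^ k"
    proof -
      have "Suc p \<le> k" using k by simp
      then have "norm z ^ Suc p \<le> r ^ k" by (rule pow_le_r[OF z r])
      then have "\<bar>coef n k (Suc p) - x\<bar> * norm z ^ Suc p \<le> K * r ^ k"
        using e1 by (intro mult_mono) auto
      then show ?thesis by (simp only: norm_mult norm_power norm_of_real)
    qed
    have b3: "norm (of_real (coef n k k - 1 + x) * z ^ k) \<le> 3 * K * r ^ k"
    proof -
      have "norm z ^ k \<le> r ^ k" by (rule pow_le_r[OF z r]) simp
      then have "\<bar>coef n k k - 1 + x\<bar> * norm z ^ k \<le> 3 * K * r ^ k"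
        using e2 by (intro mult_mono) auto
      then show ?thesis by (simp only: norm_mult norm_power norm_of_real)
    qed
    have "norm (gbd n (\<lambda>t. (complex_of_real t) ^ k) z - z ^ k - of_real x * (z ^ (k - 1) - z ^ k))
       \<le> T * r ^ k + K * r ^ k + 3 * K * r ^ k"
      unfolding E by (intro norm_triangle_le add_mono b1 b2 b3)
    also have "\<dots> \<le> 8 * K * r ^ k"
      using T r by (simp add: algebra_simps mult_right_mono)
    finally show ?thesis unfolding xk K_def N_def by simp
  qed
qed



lemma bern_cont: "continuous_on S (\<lambda>t. bern m i (complex_of_real t))"
  unfolding bern_def by (intro continuous_intros)

lemma gbd_cmult: "gbd n (\<lambda>t. c * F t) z = c * gbd n F z"
  unfolding gbd_def by (simp add: sum_distrib_left algebra_simps)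

lemma gbd_sum:
  assumes "finite I" "\<And>i. i \<in> I \<Longrightarrow> continuous_on {0..1} (F i)"
  shows "gbd n (\<lambda>t. \<Sum>i\<in>I. F i t) z = (\<Sum>i\<in>I. gbd n (F i) z)"
proof -
  have int: "(\<lambda>t. F i t * bern m j (complex_of_real t)) integrable_on {0..1}" if "i \<in> I" for i m j
    by (intro integrable_continuous_real continuous_intros bern_cont assms(2) that)
  have "integral {0..1} (\<lambda>t. (\<Sum>i\<in>I. F i t) * bern m j (complex_of_real t))
      = (\<Sum>i\<in>I. integral {0..1} (\<lambda>t. F i t * bern m j (complex_of_real t)))" for m j
    unfolding sum_distrib_right by (rule integral_sum[OF assms(1) int])
  then have "gbd n (\<lambda>t. \<Sum>i\<in>I. F i t) z = of_nat (n - 1) * (\<Sum>j=1..n-1.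
        (\<Sum>i\<in>I. integral {0..1} (\<lambda>t. F i t * bern (n - 2) (j - 1) (complex_of_real t))) * bern n j z)
     + (1 - z) ^ n * (\<Sum>i\<in>I. F i 0) + z ^ n * (\<Sum>i\<in>I. F i 1)"
    unfolding gbd_def by simp
  also have "\<dots> = (\<Sum>i\<in>I. of_nat (n - 1) * (\<Sum>j=1..n-1.
        integral {0..1} (\<lambda>t. F i t * bern (n - 2) (j - 1) (complex_of_real t)) * bern n j z)
     + (1 - z) ^ n * F i 0 + z ^ n * F i 1)"
    by (simp add: sum.distrib sum_distrib_left sum_distrib_right sum.swap[of _ I])
  also have "\<dots> = (\<Sum>i\<in>I. gbd n (F i) z)" unfolding gbd_def ..
  finally show ?thesis .
qed

lemma gbd_lin:
  assumes "finite I" "\<And>i. i \<in> I \<Longrightarrow> continuous_on {0..1} (F i)"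
  shows "gbd n (\<lambda>t. \<Sum>i\<in>I. c i * F i t) z = (\<Sum>i\<in>I. c i * gbd n (F i) z)"
proof -
  have "gbd n (\<lambda>t. \<Sum>i\<in>I. c i * F i t) z = (\<Sum>i\<in>I. gbd n (\<lambda>t. c i * F i t) z)"
    using assms by (intro gbd_sum) (auto intro!: continuous_intros)
  then show ?thesis by (simp add: gbd_cmult)
qed



definition dlt :: "nat \<Rightarrow> complex \<Rightarrow> nat \<Rightarrow> complex" where
  "dlt n z k = of_nat (k * (k - 1)) / of_nat n * (z ^ (k - 1) - z ^ k)"

lemma delta_key:
  assumes "n \<ge> 1"
  shows "dlt n z (k + j) - z ^ k * dlt n z j - z ^ j * dlt n z k
       = 2 * z * (1 - z) * (of_nat k * z ^ (k - 1)) * (of_nat j * z ^ (j - 1)) / of_nat n"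
proof (cases "k = 0 \<or> j = 0")
  case True then show ?thesis by (auto simp: dlt_def)
next
  case False
  then obtain a b where ab: "k = Suc a" "j = Suc b" by (metis not0_implies_Suc)
  have n0: "(of_nat n :: complex) \<noteq> 0" using assms by simp
  show ?thesis
    unfolding dlt_def ab using n0
    by (simp add: power_add field_simps)
qed

abbreviation mom where "mom n k z \<equiv> gbd n (\<lambda>t. (complex_of_real t) ^ k) z"

lemma eps_bound':
  assumes n: "n \<ge> 1" and z: "norm z \<le> r" and r: "1 \<le> r"
  shows "norm (mom n k z - z ^ k - dlt n z k) \<le> 8 * real k ^ 4 * r ^ k / real n ^ 2"
proof -
  have "of_real (real (k * (k - 1)) / real n) * (z ^ (k - 1) - z ^ k) = dlt n z k"
    unfolding dlt_def by simp
  then show ?thesis using eps_bound[OF n z r, of k] by simp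
qed

lemma dlt_bound:
  assumes n: "n \<ge> 1" and z: "norm z \<le> r" and r: "1 \<le> r"
  shows "norm (dlt n z k) \<le> 2 * real k ^ 2 * r ^ k / real n"
proof -
  have a: "norm (of_nat (k * (k - 1)) / (of_nat n :: complex)) \<le> real k ^ 2 / real n"
  proof -
    have "k * (k - 1) \<le> k ^ 2" unfolding power2_eq_square by (intro mult_le_mono2) auto
    then have "real (k * (k - 1)) \<le> real k ^ 2" by (metis of_nat_le_iff of_nat_power)
    then show ?thesis by (simp add: norm_divide divide_right_mono del: of_nat_mult)
  qed
  have b: "norm (z ^ (k - 1) - z ^ k) \<le> 2 * r ^ k"
  proof -
    have "norm (z ^ (k - 1) - z ^ k) \<le> norm z ^ (k - 1) + norm z ^ k"
      by (metis norm_power norm_triangle_ineq4)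
    moreover have "norm z ^ (k - 1) \<le> r ^ k" by (rule pow_le_r[OF z r]) simp
    moreover have "norm z ^ k \<le> r ^ k" by (rule pow_le_r[OF z r]) simp
    ultimately show ?thesis by linarith
  qed
  have "norm (dlt n z k) \<le> (real k ^ 2 / real n) * (2 * r ^ k)"
    unfolding dlt_def norm_mult by (intro mult_mono a b) auto
  then show ?thesis by (simp add: ac_simps)
qed

lemma D_identity:
  fixes Mkj Mk Mj zk zj dk dj dkj C :: complex
  assumes "dkj - zk * dj - zj * dk = C"
  shows "Mkj - Mk * Mj - C = (Mkj - zk * zj - dkj) - zk * (Mj - zj - dj) - dk * dj
           - dk * (Mj - zj - dj) - (Mk - zk - dk) * Mj"
  using assms by (simp add: algebra_simps)

lemma poly_dom:
  fixes k j :: nat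
  defines "P \<equiv> (real k + 1) * (real j + 1)"
  shows "real (k + j) ^ 4 \<le> P ^ 6" "real j ^ 4 \<le> P ^ 6" "real k ^ 4 \<le> P ^ 6"
    "real k ^ 2 * real j ^ 2 \<le> P ^ 6" "real k ^ 2 * real j ^ 4 \<le> P ^ 6"
proof -
  have "1 * 1 \<le> (real k + 1) * (real j + 1)" by (intro mult_mono) auto
  then have P1: "P \<ge> 1" unfolding P_def by simp
  have kP: "real k \<le> P" unfolding P_def by (simp add: algebra_simps)
  have jP: "real j \<le> P" unfolding P_def by (simp add: algebra_simps)
  have kjP: "real (k + j) \<le> P" unfolding P_def by (simp add: algebra_simps)
  have P46: "P ^ 4 \<le> P ^ 6" using P1 by (intro power_increasing) auto
  have "real (k + j) ^ 4 \<le> P ^ 4" using kjP by (intro power_mono) auto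
  then show "real (k + j) ^ 4 \<le> P ^ 6" using P46 by linarith
  have "real j ^ 4 \<le> P ^ 4" using jP by (intro power_mono) auto
  then show "real j ^ 4 \<le> P ^ 6" using P46 by linarith
  have "real k ^ 4 \<le> P ^ 4" using kP by (intro power_mono) auto
  then show "real k ^ 4 \<le> P ^ 6" using P46 by linarith
  have "real k ^ 2 * real j ^ 2 \<le> P ^ 2 * P ^ 2" using kP jP by (intro mult_mono power_mono) auto
  also have "\<dots> = P ^ 4" by simp
  finally show "real k ^ 2 * real j ^ 2 \<le> P ^ 6" using P46 by linarith
  have "real k ^ 2 * real j ^ 4 \<le> P ^ 2 * P ^ 4" using kP jP by (intro mult_mono power_mono) auto
  also have "\<dots> = P ^ 6" by simp
  finally show "real k ^ 2 * real j ^ 4 \<le> P ^ 6" .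
qed

lemma norm5: "norm ((a::complex) - b - c - d - e) \<le> norm a + norm b + norm c + norm d + norm e"
proof -
  have "norm (a - b - c - d - e) \<le> norm (a - b - c - d) + norm e" by (rule norm_triangle_ineq4)
  moreover have "norm (a - b - c - d) \<le> norm (a - b - c) + norm d" by (rule norm_triangle_ineq4)
  moreover have "norm (a - b - c) \<le> norm (a - b) + norm c" by (rule norm_triangle_ineq4)
  moreover have "norm (a - b) \<le> norm a + norm b" by (rule norm_triangle_ineq4)
  ultimately show ?thesis by linarith
qed

lemma D_bound:
  assumes n: "n \<ge> 1" and z: "norm z \<le> r" and r: "1 \<le> r"
  shows "norm (mom n (k + j) z - mom n k z * mom n j z
           - 2 * z * (1 - z) * (of_nat k * z ^ (k - 1)) * (of_nat j * z ^ (j - 1)) / of_nat n)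
         \<le> 64 * (real k + 1) ^ 6 * (real j + 1) ^ 6 * r ^ (k + j) / real n ^ 2"
proof -
  define P where "P = (real k + 1) * (real j + 1)"
  define B where "B = r ^ (k + j) / real n ^ 2"
  have B0: "B \<ge> 0" unfolding B_def using r by simp
  have N: "real n \<ge> 1" using n by simp
  let ?e = "\<lambda>m. mom n m z - z ^ m - dlt n z m"
  have eq: "mom n (k + j) z - mom n k z * mom n j z
           - 2 * z * (1 - z) * (of_nat k * z ^ (k - 1)) * (of_nat j * z ^ (j - 1)) / of_nat n
      = ?e (k + j) - z ^ k * ?e j - dlt n z k * dlt n z j - dlt n z k * ?e j - ?e k * mom n j z"
    using D_identity[OF delta_key[OF n, where k=k and j=j and z=z], of "mom n (k + j) z" "mom n k z" "mom n j z"]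
    by (simp add: power_add)
  have ekj: "norm (?e (k + j)) \<le> 8 * real (k + j) ^ 4 * B"
    using eps_bound'[OF n z r, of "k + j"] unfolding B_def by simp
  have ej: "norm (?e j) \<le> 8 * real j ^ 4 * r ^ j / real n ^ 2"
    using eps_bound'[OF n z r, of j] .
  have ek: "norm (?e k) \<le> 8 * real k ^ 4 * r ^ k / real n ^ 2"
    using eps_bound'[OF n z r, of k] .
  have dk: "norm (dlt n z k) \<le> 2 * real k ^ 2 * r ^ k / real n" by (rule dlt_bound[OF n z r])
  have dj: "norm (dlt n z j) \<le> 2 * real j ^ 2 * r ^ j / real n" by (rule dlt_bound[OF n z r])
  have zk: "norm (z ^ k) \<le> r ^ k" unfolding norm_power by (rule pow_le_r[OF z r]) simp
  have mj: "norm (mom n j z) \<le> r ^ j" by (rule mom_bound[OF n z r])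
  have rk: "r ^ k \<ge> 0" "r ^ j \<ge> 0" using r by auto
  have t2: "norm (z ^ k * ?e j) \<le> 8 * real j ^ 4 * B"
  proof -
    have "norm (z ^ k * ?e j) \<le> r ^ k * (8 * real j ^ 4 * r ^ j / real n ^ 2)"
      unfolding norm_mult by (intro mult_mono zk ej) (auto simp: rk)
    then show ?thesis unfolding B_def by (simp add: power_add algebra_simps)
  qed
  have t3: "norm (dlt n z k * dlt n z j) \<le> 4 * (real k ^ 2 * real j ^ 2) * B"
  proof -
    have "norm (dlt n z k * dlt n z j) \<le> (2 * real k ^ 2 * r ^ k / real n) * (2 * real j ^ 2 * r ^ j / real n)"
      unfolding norm_mult by (intro mult_mono dk dj) (auto simp: rk)
    then show ?thesis unfolding B_def by (simp add: power_add power2_eq_square algebra_simps)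
  qed
  have t4: "norm (dlt n z k * ?e j) \<le> 16 * (real k ^ 2 * real j ^ 4) * B"
  proof -
    have "norm (dlt n z k * ?e j) \<le> (2 * real k ^ 2 * r ^ k / real n) * (8 * real j ^ 4 * r ^ j / real n ^ 2)"
      unfolding norm_mult by (intro mult_mono dk ej) (auto simp: rk)
    also have "\<dots> = 16 * (real k ^ 2 * real j ^ 4) * B / real n"
      unfolding B_def by (simp add: power_add algebra_simps)
    also have "\<dots> \<le> 16 * (real k ^ 2 * real j ^ 4) * B"
    proof -
      have "0 \<le> 16 * (real k ^ 2 * real j ^ 4) * B" using B0 by simp
      then show ?thesis using divide_left_mono[of 1 "real n" "16 * (real k ^ 2 * real j ^ 4) * B"] N by simp
    qed
    finally show ?thesis .
  qed
  have t5: "norm (?e k * mom n j z) \<le> 8 * real k ^ 4 * B"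
  proof -
    have "norm (?e k * mom n j z) \<le> (8 * real k ^ 4 * r ^ k / real n ^ 2) * r ^ j"
      unfolding norm_mult by (intro mult_mono ek mj) (auto simp: rk)
    then show ?thesis unfolding B_def by (simp add: power_add algebra_simps)
  qed
  have "norm (mom n (k + j) z - mom n k z * mom n j z
           - 2 * z * (1 - z) * (of_nat k * z ^ (k - 1)) * (of_nat j * z ^ (j - 1)) / of_nat n)
     \<le> 8 * real (k + j) ^ 4 * B + 8 * real j ^ 4 * B + 4 * (real k ^ 2 * real j ^ 2) * B
        + 16 * (real k ^ 2 * real j ^ 4) * B + 8 * real k ^ 4 * B"
    unfolding eq by (rule order_trans[OF norm5]) (intro add_mono ekj t2 t3 t4 t5)
  also have "\<dots> \<le> 8 * P ^ 6 * B + 8 * P ^ 6 * B + 4 * P ^ 6 * B + 16 * P ^ 6 * B + 8 * P ^ 6 * B"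
    using poly_dom[where k=k and j=j] B0 unfolding P_def
    by (intro add_mono mult_right_mono mult_left_mono) auto
  also have "\<dots> \<le> 64 * P ^ 6 * B" using B0 by (simp add: algebra_simps)
  finally show ?thesis unfolding P_def B_def by (simp add: power_mult_distrib)
qed



lemma poly_bound:
  assumes n: "n \<ge> 1" and z: "norm z \<le> r" and r: "1 \<le> r"
  shows "norm (gbd n (\<lambda>t. (\<Sum>k<N. a k * (complex_of_real t) ^ k) * (\<Sum>j<N. b j * (complex_of_real t) ^ j)) z
     - gbd n (\<lambda>t. \<Sum>k<N. a k * (complex_of_real t) ^ k) z * gbd n (\<lambda>t. \<Sum>j<N. b j * (complex_of_real t) ^ j) z
     - 2 * z * (1 - z) * (\<Sum>k<N. a k * (of_nat k * z ^ (k - 1))) * (\<Sum>j<N. b j * (of_nat j * z ^ (j - 1))) / of_nat n)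
   \<le> 64 * (\<Sum>k<N. norm (a k) * (real k + 1) ^ 6 * r ^ k) * (\<Sum>j<N. norm (b j) * (real j + 1) ^ 6 * r ^ j) / real n ^ 2"
proof -
  define D where "D k j = mom n (k + j) z - mom n k z * mom n j z
           - 2 * z * (1 - z) * (of_nat k * z ^ (k - 1)) * (of_nat j * z ^ (j - 1)) / of_nat n" for k j
  have G1: "gbd n (\<lambda>t. (\<Sum>k<N. a k * (complex_of_real t) ^ k) * (\<Sum>j<N. b j * (complex_of_real t) ^ j)) z
      = (\<Sum>k<N. a k * (\<Sum>j<N. b j * mom n (k + j) z))"
  proof -
    have "gbd n (\<lambda>t. (\<Sum>k<N. a k * (complex_of_real t) ^ k) * (\<Sum>j<N. b j * (complex_of_real t) ^ j)) z
       = gbd n (\<lambda>t. \<Sum>k<N. a k * (\<Sum>j<N. b j * (complex_of_real t) ^ (k + j))) z"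
    proof -
      have "(\<lambda>t. (\<Sum>k<N. a k * (complex_of_real t) ^ k) * (\<Sum>j<N. b j * (complex_of_real t) ^ j))
          = (\<lambda>t. \<Sum>k<N. a k * (\<Sum>j<N. b j * (complex_of_real t) ^ (k + j)))"
      proof
        fix t
        have "(\<Sum>k<N. a k * (complex_of_real t) ^ k) * (\<Sum>j<N. b j * (complex_of_real t) ^ j)
            = (\<Sum>k<N. a k * (complex_of_real t) ^ k * (\<Sum>j<N. b j * (complex_of_real t) ^ j))"
          by (rule sum_distrib_right)
        also have "\<dots> = (\<Sum>k<N. a k * (\<Sum>j<N. b j * (complex_of_real t) ^ (k + j)))"
          by (rule sum.cong) (simp_all add: sum_distrib_left power_add mult_ac)
        finally show "(\<Sum>k<N. a k * (complex_of_real t) ^ k) * (\<Sum>j<N. b j * (complex_of_real t) ^ j)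
            = (\<Sum>k<N. a k * (\<Sum>j<N. b j * (complex_of_real t) ^ (k + j)))" .
      qed
      then show ?thesis by simp
    qed
    also have "\<dots> = (\<Sum>k<N. a k * gbd n (\<lambda>t. \<Sum>j<N. b j * (complex_of_real t) ^ (k + j)) z)"
      by (rule gbd_lin) (auto intro!: continuous_intros)
    also have "\<dots> = (\<Sum>k<N. a k * (\<Sum>j<N. b j * mom n (k + j) z))"
      by (subst gbd_lin) (auto intro!: continuous_intros)
    finally show ?thesis .
  qed
  have G2: "gbd n (\<lambda>t. \<Sum>k<N. a k * (complex_of_real t) ^ k) z = (\<Sum>k<N. a k * mom n k z)"
    by (rule gbd_lin) (auto intro!: continuous_intros)
  have G3: "gbd n (\<lambda>t. \<Sum>j<N. b j * (complex_of_real t) ^ j) z = (\<Sum>j<N. b j * mom n j z)"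
    by (rule gbd_lin) (auto intro!: continuous_intros)
  have eq: "gbd n (\<lambda>t. (\<Sum>k<N. a k * (complex_of_real t) ^ k) * (\<Sum>j<N. b j * (complex_of_real t) ^ j)) z
     - gbd n (\<lambda>t. \<Sum>k<N. a k * (complex_of_real t) ^ k) z * gbd n (\<lambda>t. \<Sum>j<N. b j * (complex_of_real t) ^ j) z
     - 2 * z * (1 - z) * (\<Sum>k<N. a k * (of_nat k * z ^ (k - 1))) * (\<Sum>j<N. b j * (of_nat j * z ^ (j - 1))) / of_nat n
     = (\<Sum>k<N. \<Sum>j<N. a k * b j * D k j)"
  proof -
    let ?c = "2 * z * (1 - z)"
    let ?X = "\<lambda>k j. a k * (b j * mom n (k + j) z)"
    let ?Y = "\<lambda>k j. (a k * mom n k z) * (b j * mom n j z)"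
    let ?Z = "\<lambda>k j. (a k * (of_nat k * z ^ (k - 1))) * (b j * (of_nat j * z ^ (j - 1)))"
    have "(\<Sum>k<N. \<Sum>j<N. a k * b j * D k j) = (\<Sum>k<N. \<Sum>j<N. ?X k j - ?Y k j - ?c * ?Z k j / of_nat n)"
      by (intro sum.cong refl) (simp add: D_def algebra_simps)
    also have "\<dots> = (\<Sum>k<N. \<Sum>j<N. ?X k j) - (\<Sum>k<N. \<Sum>j<N. ?Y k j) - ?c * (\<Sum>k<N. \<Sum>j<N. ?Z k j) / of_nat n"
      by (simp only: sum_subtractf sum_divide_distrib[symmetric] sum_distrib_left[symmetric])
    also have "\<dots> = (\<Sum>k<N. a k * (\<Sum>j<N. b j * mom n (k + j) z))
        - (\<Sum>k<N. a k * mom n k z) * (\<Sum>j<N. b j * mom n j z)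
        - ?c * ((\<Sum>k<N. a k * (of_nat k * z ^ (k - 1))) * (\<Sum>j<N. b j * (of_nat j * z ^ (j - 1)))) / of_nat n"
      unfolding sum_product by (simp only: sum_distrib_left)
    finally show ?thesis unfolding G1 G2 G3 by (simp add: mult.assoc)
  qed
  define W where "W k = (real k + 1) ^ 6" for k :: nat
  have "norm (\<Sum>k<N. \<Sum>j<N. a k * b j * D k j) \<le> (\<Sum>k<N. \<Sum>j<N. norm (a k) * norm (b j) * (64 * W k * W j * r ^ (k + j) / real n ^ 2))"
  proof -
    have "norm (\<Sum>k<N. \<Sum>j<N. a k * b j * D k j) \<le> (\<Sum>k<N. norm (\<Sum>j<N. a k * b j * D k j))"
      by (rule norm_sum)
    also have "\<dots> \<le> (\<Sum>k<N. \<Sum>j<N. norm (a k * b j * D k j))"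
      by (intro sum_mono norm_sum)
    also have "\<dots> \<le> (\<Sum>k<N. \<Sum>j<N. norm (a k) * norm (b j) * (64 * W k * W j * r ^ (k + j) / real n ^ 2))"
      unfolding norm_mult W_def D_def
      by (intro sum_mono mult_left_mono D_bound[OF n z r]) auto
    finally show ?thesis .
  qed
  also have "\<dots> = 64 * (\<Sum>k<N. norm (a k) * W k * r ^ k) * (\<Sum>j<N. norm (b j) * W j * r ^ j) / real n ^ 2"
    by (simp add: sum_distrib_left sum_distrib_right sum_divide_distrib power_add algebra_simps)
  finally show ?thesis unfolding eq W_def .
qed



lemma summable_poly_geom:
  fixes q :: real
  assumes "0 \<le> q" "q < 1"
  shows "summable (\<lambda>k. (real k + 1) ^ 6 * q ^ k)"
proof -
  have lim: "(\<lambda>n. norm ((real n + 1) ^ 6) / norm ((real (Suc n) + 1) ^ 6)) \<longlonglongrightarrow> 1"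
    by simp real_asymp
  have "conv_radius (\<lambda>n. (real n + 1) ^ 6) = ereal 1"
    by (rule conv_radius_ratio_limit_nonzero[OF refl _ lim]) simp
  then have "ereal (norm q) < conv_radius (\<lambda>n. (real n + 1) ^ 6)" using assms by simp
  then show ?thesis by (rule summable_in_conv_radius)
qed

lemma bern_norm_le:
  assumes "t \<in> {0..1::real}"
  shows "norm (bern m i (complex_of_real t)) \<le> real (m choose i)"
proof -
  have "bern m i (complex_of_real t) = complex_of_real (real (m choose i) * (t ^ i * (1 - t) ^ (m - i)))"
    unfolding bern_def by simp
  then have "norm (bern m i (complex_of_real t)) = \<bar>real (m choose i) * (t ^ i * (1 - t) ^ (m - i))\<bar>"
    by (simp only: norm_of_real)
  also have "\<dots> = real (m choose i) * (t ^ i * (1 - t) ^ (m - i))"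
    using assms by (intro abs_of_nonneg) auto
  also have "\<dots> \<le> real (m choose i) * 1"
    using assms by (intro mult_left_mono mult_le_one power_le_one) auto
  finally show ?thesis by simp
qed

lemma gbd_lim:
  assumes cont: "\<And>N. continuous_on {0..1} (F N)"
    and conv: "\<And>t. t \<in> {0..1} \<Longrightarrow> (\<lambda>N. F N t) \<longlonglongrightarrow> G t"
    and bnd: "\<And>N t. t \<in> {0..1} \<Longrightarrow> norm (F N t) \<le> B"
  shows "(\<lambda>N. gbd n (F N) z) \<longlonglongrightarrow> gbd n G z"
proof -
  have I: "(\<lambda>N. integral {0..1} (\<lambda>t. F N t * bern m i (complex_of_real t)))
      \<longlonglongrightarrow> integral {0..1} (\<lambda>t. G t * bern m i (complex_of_real t))" for m i
  proof (rule dominated_convergence(2))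
    show "(\<lambda>t. F N t * bern m i (complex_of_real t)) integrable_on {0..1}" for N
      by (intro integrable_continuous_real continuous_intros bern_cont cont)
    show "(\<lambda>t::real. B * real (m choose i)) integrable_on {0..1}"
      by (intro integrable_continuous_real continuous_intros)
    show "norm (F N t * bern m i (complex_of_real t)) \<le> B * real (m choose i)" if "t \<in> {0..1}" for N t
    proof -
      have "0 \<le> B" using bnd[OF that, of N] norm_ge_zero order_trans by blast
      then show ?thesis
        unfolding norm_mult using bnd[OF that] bern_norm_le[OF that]
        by (intro mult_mono) auto
    qed
    show "(\<lambda>N. F N t * bern m i (complex_of_real t)) \<longlonglongrightarrow> G t * bern m i (complex_of_real t)"
      if "t \<in> {0..1}" for t
      by (intro tendsto_intros conv that)
  qed
  have c0: "(\<lambda>N. F N 0) \<longlonglongrightarrow> G 0" by (rule conv) simp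
  have c1: "(\<lambda>N. F N 1) \<longlonglongrightarrow> G 1" by (rule conv) simp
  show ?thesis unfolding gbd_def
    by (intro tendsto_intros I c0 c1)
qed



lemma coeff_facts:
  fixes f :: "complex \<Rightarrow> complex" and r R :: real
  assumes r: "1 \<le> r" and rR: "r < R" and hol: "f holomorphic_on ball 0 R"
  shows "summable (\<lambda>k. norm ((deriv ^^ k) f 0 / fact k) * (real k + 1) ^ 6 * r ^ k)"
    and "summable (\<lambda>k. norm ((deriv ^^ k) f 0 / fact k))"
    and "\<And>w. w \<in> ball 0 R \<Longrightarrow> (\<lambda>N. \<Sum>k<N. (deriv ^^ k) f 0 / fact k * w ^ k) \<longlonglongrightarrow> f w"
    and "\<And>w. w \<in> ball 0 R \<Longrightarrow> (\<lambda>N. \<Sum>k<N. (deriv ^^ k) f 0 / fact k * (of_nat k * w ^ (k - 1))) \<longlonglongrightarrow> deriv f w"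
proof -
  define a where "a k = (deriv ^^ k) f 0 / fact k" for k
  define \<rho> where "\<rho> = (r + R) / 2"
  have \<rho>: "r < \<rho>" "\<rho> < R" "0 < \<rho>" using r rR by (auto simp: \<rho>_def)
  have cont: "continuous_on (cball 0 \<rho>) f"
    by (rule continuous_on_subset[OF holomorphic_on_imp_continuous_on[OF hol]]) (use \<rho> in auto)
  have "bounded (f ` sphere 0 \<rho>)"
    by (intro compact_imp_bounded compact_continuous_image compact_sphere continuous_on_subset[OF cont]) auto
  then obtain Bf where Bf: "\<And>x. x \<in> f ` sphere 0 \<rho> \<Longrightarrow> norm x \<le> Bf" by (auto simp: bounded_iff)
  have ak: "norm (a k) \<le> Bf / \<rho> ^ k" for k
  proof -
    have "norm ((deriv ^^ k) f 0) \<le> fact k * Bf / \<rho> ^ k"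
    proof (rule Cauchy_inequality)
      show "f holomorphic_on ball 0 \<rho>" by (rule holomorphic_on_subset[OF hol]) (use \<rho> in auto)
      show "continuous_on (cball 0 \<rho>) f" by (rule cont)
      show "0 < \<rho>" by (rule \<rho>(3))
      show "norm (f x) \<le> Bf" if "norm (0 - x) = \<rho>" for x
        using that by (intro Bf) auto
    qed
    then show ?thesis unfolding a_def by (simp add: norm_divide field_simps)
  qed
  have S1: "summable (\<lambda>k. norm (a k) * (real k + 1) ^ 6 * r ^ k)"
  proof (rule summable_comparison_test')
    show "summable (\<lambda>k. Bf * ((real k + 1) ^ 6 * (r / \<rho>) ^ k))"
      using \<rho> r by (intro summable_mult summable_poly_geom) auto
    show "norm (norm (a k) * (real k + 1) ^ 6 * r ^ k) \<le> Bf * ((real k + 1) ^ 6 * (r / \<rho>) ^ k)" for k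
    proof -
      have "norm (a k) * ((real k + 1) ^ 6 * r ^ k) \<le> Bf / \<rho> ^ k * ((real k + 1) ^ 6 * r ^ k)"
        using r by (intro mult_right_mono ak) auto
      then show ?thesis using \<rho> r by (simp add: power_divide field_simps)
    qed
  qed
  then show "summable (\<lambda>k. norm ((deriv ^^ k) f 0 / fact k) * (real k + 1) ^ 6 * r ^ k)"
    unfolding a_def .
  show "summable (\<lambda>k. norm ((deriv ^^ k) f 0 / fact k))"
  proof (rule summable_comparison_test'[OF S1])
    fix k
    have "1 \<le> (real k + 1) ^ 6 * r ^ k"
    proof -
      have "1 * 1 \<le> (real k + 1) ^ 6 * r ^ k"
        using r by (intro mult_mono one_le_power) auto
      then show ?thesis by simp
    qed
    then have "norm (a k) * 1 \<le> norm (a k) * ((real k + 1) ^ 6 * r ^ k)"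
      by (intro mult_left_mono) auto
    then show "norm (norm ((deriv ^^ k) f 0 / fact k)) \<le> norm (a k) * (real k + 1) ^ 6 * r ^ k"
      by (simp add: a_def mult.assoc)
  qed
  show "(\<lambda>N. \<Sum>k<N. (deriv ^^ k) f 0 / fact k * w ^ k) \<longlonglongrightarrow> f w" if "w \<in> ball 0 R" for w
    using holomorphic_power_series[OF hol that] by (simp add: sums_def)
  show "(\<lambda>N. \<Sum>k<N. (deriv ^^ k) f 0 / fact k * (of_nat k * w ^ (k - 1))) \<longlonglongrightarrow> deriv f w"
    if w: "w \<in> ball 0 R" for w
  proof (rule LIMSEQ_imp_Suc)
    have hd: "deriv f holomorphic_on ball 0 R" by (rule holomorphic_deriv[OF hol]) simp
    have "(\<lambda>k. (deriv ^^ k) (deriv f) 0 / fact k * (w - 0) ^ k) sums deriv f w"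
      by (rule holomorphic_power_series[OF hd w])
    moreover have "(deriv ^^ k) (deriv f) 0 / fact k * (w - 0) ^ k
        = (deriv ^^ Suc k) f 0 / fact (Suc k) * (of_nat (Suc k) * w ^ (Suc k - 1))" for k
    proof -
      have "(deriv ^^ Suc k) f = (deriv ^^ k) (deriv f)" by (simp only: funpow_Suc_right o_def)
      moreover have "fact (Suc k) = (of_nat (Suc k) * fact k :: complex)" by simp
      ultimately show ?thesis by (simp add: field_simps del: of_nat_Suc)
    qed
    ultimately have "(\<lambda>k. (deriv ^^ Suc k) f 0 / fact (Suc k) * (of_nat (Suc k) * w ^ (Suc k - 1))) sums deriv f w"
      by simp
    then show "(\<lambda>N. \<Sum>k<Suc N. (deriv ^^ k) f 0 / fact k * (of_nat k * w ^ (k - 1))) \<longlonglongrightarrow> deriv f w"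
      unfolding sums_def by (subst sum.lessThan_Suc_shift) simp
  qed
qed



lemma partial_le:
  assumes "summable (\<lambda>k. norm (a k :: complex))" "t \<in> {0..1::real}"
  shows "norm (\<Sum>k<N. a k * (complex_of_real t) ^ k) \<le> (\<Sum>k. norm (a k))"
proof -
  have "norm (\<Sum>k<N. a k * (complex_of_real t) ^ k) \<le> (\<Sum>k<N. norm (a k * (complex_of_real t) ^ k))"
    by (rule norm_sum)
  also have "\<dots> \<le> (\<Sum>k<N. norm (a k))"
  proof (rule sum_mono)
    fix k
    have "norm (complex_of_real t) ^ k \<le> 1" using assms(2) by (intro power_le_one) auto
    then show "norm (a k * (complex_of_real t) ^ k) \<le> norm (a k)"
      unfolding norm_mult norm_power by (metis mult.right_neutral mult_left_mono norm_ge_zero)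
  qed
  also have "\<dots> \<le> (\<Sum>k. norm (a k))"
    by (rule sum_le_suminf[OF assms(1)]) auto
  finally show ?thesis .
qed

theorem theorem5p2:
  fixes f g :: "complex \<Rightarrow> complex" and r R :: real
  assumes "1 \<le> r" and "r < R"
    and "f holomorphic_on ball 0 R" and "g holomorphic_on ball 0 R"
  shows "\<exists>C. \<forall>n::nat. n \<ge> 1 \<longrightarrow> (\<forall>z. norm z \<le> r \<longrightarrow>
           norm (gbd n (\<lambda>t. f (of_real t) * g (of_real t)) z
                 - gbd n (\<lambda>t. f (of_real t)) z * gbd n (\<lambda>t. g (of_real t)) z
                 - 2 * z * (1 - z) * deriv f z * deriv g z / of_nat n)
           \<le> C / (real n)^2)"
proof -
  note r = assms(1) and rR = assms(2)
  define a where "a k = (deriv ^^ k) f 0 / fact k" for k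
  define b where "b k = (deriv ^^ k) g 0 / fact k" for k
  note fa = coeff_facts[OF assms(1,2,3), folded a_def]
  note fb = coeff_facts[OF assms(1,2,4), folded b_def]
  define Ka where "Ka = (\<Sum>k. norm (a k) * (real k + 1) ^ 6 * r ^ k)"
  define Kb where "Kb = (\<Sum>k. norm (b k) * (real k + 1) ^ 6 * r ^ k)"
  define Sa where "Sa = (\<Sum>k. norm (a k))"
  define Sb where "Sb = (\<Sum>k. norm (b k))"
  have Ka: "(\<Sum>k<N. norm (a k) * (real k + 1) ^ 6 * r ^ k) \<le> Ka" for N
    unfolding Ka_def using r by (intro sum_le_suminf[OF fa(1)]) auto
  have Kb: "(\<Sum>k<N. norm (b k) * (real k + 1) ^ 6 * r ^ k) \<le> Kb" for N
    unfolding Kb_def using r by (intro sum_le_suminf[OF fb(1)]) auto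
  have Ka0: "0 \<le> (\<Sum>k<N. norm (a k) * (real k + 1) ^ 6 * r ^ k)" for N
    using r by (intro sum_nonneg) auto
  have Kb0: "0 \<le> (\<Sum>k<N. norm (b k) * (real k + 1) ^ 6 * r ^ k)" for N
    using r by (intro sum_nonneg) auto
  show ?thesis
  proof (intro exI[of _ "64 * Ka * Kb"] allI impI)
    fix n :: nat and z :: complex
    assume n: "n \<ge> 1" and z: "norm z \<le> r"
    have zR: "z \<in> ball 0 R" using z rR by simp
    have tR: "complex_of_real t \<in> ball 0 R" if "t \<in> {0..1}" for t
      using that r rR by auto
    define PN where "PN N t = (\<Sum>k<N. a k * (complex_of_real t) ^ k)" for N t
    define QN where "QN N t = (\<Sum>j<N. b j * (complex_of_real t) ^ j)" for N t
    define E where "E N = gbd n (\<lambda>t. PN N t * QN N t) z - gbd n (PN N) z * gbd n (QN N) z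
       - 2 * z * (1 - z) * (\<Sum>k<N. a k * (of_nat k * z ^ (k - 1))) * (\<Sum>j<N. b j * (of_nat j * z ^ (j - 1))) / of_nat n" for N
    have bound: "norm (E N) \<le> 64 * Ka * Kb / real n ^ 2" for N
    proof -
      have "norm (E N) \<le> 64 * (\<Sum>k<N. norm (a k) * (real k + 1) ^ 6 * r ^ k) * (\<Sum>j<N. norm (b j) * (real j + 1) ^ 6 * r ^ j) / real n ^ 2"
        unfolding E_def PN_def QN_def by (rule poly_bound[OF n z r])
      also have "\<dots> \<le> 64 * Ka * Kb / real n ^ 2"
      proof -
        have "0 \<le> Ka" using Ka0[of 0] Ka[of 0] by linarith
        then show ?thesis
          using Ka Kb Ka0 Kb0 by (intro divide_right_mono mult_mono mult_left_mono) auto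
      qed
      finally show ?thesis .
    qed
    have cPN: "continuous_on {0..1} (PN N)" for N unfolding PN_def by (intro continuous_intros)
    have cQN: "continuous_on {0..1} (QN N)" for N unfolding QN_def by (intro continuous_intros)
    have lP: "(\<lambda>N. PN N t) \<longlonglongrightarrow> f (of_real t)" if "t \<in> {0..1}" for t
      unfolding PN_def using fa(3)[OF tR[OF that]] .
    have lQ: "(\<lambda>N. QN N t) \<longlonglongrightarrow> g (of_real t)" if "t \<in> {0..1}" for t
      unfolding QN_def using fb(3)[OF tR[OF that]] .
    have bP: "norm (PN N t) \<le> Sa" if "t \<in> {0..1}" for N t
      unfolding PN_def Sa_def by (rule partial_le[OF fa(2) that])
    have bQ: "norm (QN N t) \<le> Sb" if "t \<in> {0..1}" for N t
      unfolding QN_def Sb_def by (rule partial_le[OF fb(2) that])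
    have L1: "(\<lambda>N. gbd n (\<lambda>t. PN N t * QN N t) z) \<longlonglongrightarrow> gbd n (\<lambda>t. f (of_real t) * g (of_real t)) z"
    proof (rule gbd_lim)
      show "continuous_on {0..1} (\<lambda>t. PN N t * QN N t)" for N by (intro continuous_intros cPN cQN)
      show "(\<lambda>N. PN N t * QN N t) \<longlonglongrightarrow> f (of_real t) * g (of_real t)" if "t \<in> {0..1}" for t
        by (intro tendsto_mult lP lQ that)
      show "norm (PN N t * QN N t) \<le> Sa * Sb" if "t \<in> {0..1}" for N t
      proof -
        have "0 \<le> Sa" using bP[OF that, of N] norm_ge_zero order_trans by blast
        then show ?thesis unfolding norm_mult using bP[OF that] bQ[OF that] by (intro mult_mono) auto
      qed
    qed
    have L2: "(\<lambda>N. gbd n (PN N) z) \<longlonglongrightarrow> gbd n (\<lambda>t. f (of_real t)) z"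
      by (rule gbd_lim[OF cPN lP bP])
    have L3: "(\<lambda>N. gbd n (QN N) z) \<longlonglongrightarrow> gbd n (\<lambda>t. g (of_real t)) z"
      by (rule gbd_lim[OF cQN lQ bQ])
    have L4: "(\<lambda>N. \<Sum>k<N. a k * (of_nat k * z ^ (k - 1))) \<longlonglongrightarrow> deriv f z" by (rule fa(4)[OF zR])
    have L5: "(\<lambda>N. \<Sum>k<N. b k * (of_nat k * z ^ (k - 1))) \<longlonglongrightarrow> deriv g z" by (rule fb(4)[OF zR])
    have "E \<longlonglongrightarrow> gbd n (\<lambda>t. f (of_real t) * g (of_real t)) z
                 - gbd n (\<lambda>t. f (of_real t)) z * gbd n (\<lambda>t. g (of_real t)) z
                 - 2 * z * (1 - z) * deriv f z * deriv g z / of_nat n"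
      unfolding E_def using n by (intro tendsto_intros L1 L2 L3 L4 L5) auto
    then have "(\<lambda>N. norm (E N)) \<longlonglongrightarrow> norm (gbd n (\<lambda>t. f (of_real t) * g (of_real t)) z
                 - gbd n (\<lambda>t. f (of_real t)) z * gbd n (\<lambda>t. g (of_real t)) z
                 - 2 * z * (1 - z) * deriv f z * deriv g z / of_nat n)"
      by (rule tendsto_norm)
    then show "norm (gbd n (\<lambda>t. f (of_real t) * g (of_real t)) z
                 - gbd n (\<lambda>t. f (of_real t)) z * gbd n (\<lambda>t. g (of_real t)) z
                 - 2 * z * (1 - z) * deriv f z * deriv g z / of_nat n) \<le> 64 * Ka * Kb / (real n)^2"
      by (rule LIMSEQ_le_const2) (use bound in auto)
  qed
qed

end
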